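(* Let $n\ge2$ and $K\in\mathcal{C}_e^n$. Then $$K=\bigcap_{u\in S^{n-1}}C^{-}(u,c_K(u)).$$ Moreover, for every $x\in\partial K$ there exists $u_0\in S^{n-1}$ with $[x,u_0]=c_K(u_0)$.
   Context: For $x,y\in\mathbb{R}^n$ let $[x,y]=\sqrt{|x|^2|y|^2-(x\cdot y)^2}$. For $u\in S^{n-1}$, $r>0$, $C^{-}(u,r)=\{x\in\mathbb{R}^n:[x,u]\le r\}$ is a closed solid cylinder. $\mathcal{C}_e^n$ is the class of origin-symmetric convex bodies in $\mathbb{R}^n$ that are intersections of closed solid cylinders. For $K\in\mathcal{C}_e^n$, the cylindrical support function is $c_K(x)=\max_{y\in K}[x,y]$, $x\in\mathbb{R}^n$. $\partial K$ denotes the boundary of $K$. *)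

theory Defs
  imports "HOL-Analysis.Analysis"
begin

definition brk :: "'a::euclidean_space \<Rightarrow> 'a \<Rightarrow> real" where
  "brk x y = sqrt ((norm x)^2 * (norm y)^2 - (x \<bullet> y)^2)"

definition cyl :: "'a::euclidean_space \<Rightarrow> real \<Rightarrow> 'a set" where
  "cyl u r = {x. brk x u \<le> r}"

definition convex_body :: "'a::euclidean_space set \<Rightarrow> bool" where
  "convex_body K \<longleftrightarrow> compact K \<and> convex K \<and> interior K \<noteq> {}"

definition origin_symmetric :: "'a::euclidean_space set \<Rightarrow> bool" where
  "origin_symmetric K \<longleftrightarrow> (\<forall>x\<in>K. - x \<in> K)"

definition cyl_class :: "'a::euclidean_space set \<Rightarrow> bool" where
  "cyl_class K \<longleftrightarrow> convex_body K \<and> origin_symmetric K \<and>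
     (\<exists>F. F \<subseteq> sphere 0 1 \<times> {0<..} \<and> K = (\<Inter>(u,r)\<in>F. cyl u r))"

definition cyl_supp :: "'a::euclidean_space set \<Rightarrow> 'a \<Rightarrow> real" where
  "cyl_supp K x = Sup ((\<lambda>y. brk x y) ` K)"

end

theory Submission
  imports Defs
begin

lemma brk_sym: "brk x y = brk y x"
  unfolding brk_def by (simp add: inner_commute mult.commute)

lemma brk_le: "brk x y \<le> norm x * norm y"
proof -
  have "(norm x)^2 * (norm y)^2 - (x \<bullet> y)^2 \<le> (norm x * norm y)^2"
    by (simp add: power_mult_distrib)
  hence "brk x y \<le> sqrt ((norm x * norm y)^2)"
    unfolding brk_def using real_sqrt_le_mono by blast
  thus ?thesis by simp
qed

lemma brk_tendsto:
  assumes "(f \<longlongrightarrow> a) F" "(g \<longlongrightarrow> b) F"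
  shows "((\<lambda>k. brk (f k) (g k)) \<longlongrightarrow> brk a b) F"
  unfolding brk_def by (intro tendsto_intros assms)

theorem proposition3p7:
  fixes K :: "'a::euclidean_space set"
  assumes "DIM('a) \<ge> 2" and "cyl_class K"
  shows "K = (\<Inter>u\<in>sphere 0 1. cyl u (cyl_supp K u)) \<and>
         (\<forall>x\<in>frontier K. \<exists>u0\<in>sphere 0 1. brk x u0 = cyl_supp K u0)"
proof -
  from assms(2) obtain F where F: "F \<subseteq> sphere 0 1 \<times> {0<..}" and KF: "K = (\<Inter>(u,r)\<in>F. cyl u r)"
    and cK: "compact K" and iK: "interior K \<noteq> {}"
    unfolding cyl_class_def convex_body_def by blast
  have ne: "K \<noteq> {}" using iK interior_subset by blast
  obtain B where B: "\<And>y. y \<in> K \<Longrightarrow> norm y \<le> B"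
    using compact_imp_bounded[OF cK] bounded_iff by blast
  have bdd: "bdd_above ((\<lambda>y. brk u y) ` K)" for u :: 'a
  proof (rule bdd_aboveI2)
    fix y assume "y \<in> K"
    have "brk u y \<le> norm u * norm y" by (rule brk_le)
    also have "\<dots> \<le> norm u * B" using B[OF \<open>y \<in> K\<close>] by (simp add: mult_left_mono)
    finally show "brk u y \<le> norm u * B" .
  qed
  have up: "brk y u \<le> cyl_supp K u" if "y \<in> K" for y u
    unfolding cyl_supp_def using cSup_upper[OF imageI[OF that] bdd[of u]] by (simp add: brk_sym)
  have low: "cyl_supp K u \<le> r" if "(u, r) \<in> F" for u r
    unfolding cyl_supp_def
  proof (rule cSup_least)
    show "(\<lambda>y. brk u y) ` K \<noteq> {}" using ne by simp
    fix v assume "v \<in> (\<lambda>y. brk u y) ` K"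
    then obtain y where "y \<in> K" "v = brk u y" by blast
    hence "y \<in> cyl u r" using KF that by blast
    thus "v \<le> r" using \<open>v = brk u y\<close> by (simp add: cyl_def brk_sym)
  qed
  have part1: "K = (\<Inter>u\<in>sphere 0 1. cyl u (cyl_supp K u))"
  proof
    show "K \<subseteq> (\<Inter>u\<in>sphere 0 1. cyl u (cyl_supp K u))"
      using up by (auto simp: cyl_def)
  next
    show "(\<Inter>u\<in>sphere 0 1. cyl u (cyl_supp K u)) \<subseteq> K"
    proof
      fix x assume x: "x \<in> (\<Inter>u\<in>sphere 0 1. cyl u (cyl_supp K u))"
      have "x \<in> cyl u r" if "(u, r) \<in> F" for u r
      proof -
        have "u \<in> sphere 0 1" using F that by blast
        hence "brk x u \<le> cyl_supp K u" using x by (auto simp: cyl_def)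
        thus ?thesis using low[OF that] by (simp add: cyl_def)
      qed
      thus "x \<in> K" using KF by blast
    qed
  qed
  have part2: "\<exists>u0\<in>sphere 0 1. brk x u0 = cyl_supp K u0" if xf: "x \<in> frontier K" for x
  proof -
    have xK: "x \<in> K" using xf frontier_subset_closed compact_imp_closed[OF cK] by blast
    have xni: "x \<notin> interior K" using xf by (simp add: frontier_def)
    have "\<exists>z u r. dist x z < 1 / real (Suc k) \<and> (u, r) \<in> F \<and> \<not> brk z u \<le> r" for k
    proof -
      have "\<not> ball x (1 / real (Suc k)) \<subseteq> K"
        using xni interior_maximal[of "ball x (1 / real (Suc k))" K]
        by (metis centre_in_ball divide_pos_pos of_nat_0_less_iff open_ball subsetD zero_less_Suc zero_less_one)
      then obtain z where z: "dist x z < 1 / real (Suc k)" "z \<notin> K" by (auto simp: subset_eq)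
      then obtain u r where "(u, r) \<in> F" "z \<notin> cyl u r" using KF by blast
      thus ?thesis using z by (auto simp: cyl_def)
    qed
    then obtain z u r where zur: "\<And>k. dist x (z k) < 1 / real (Suc k)" "\<And>k. (u k, r k) \<in> F"
      "\<And>k. \<not> brk (z k) (u k) \<le> r k" by metis
    have us: "u k \<in> sphere 0 1" for k using zur(2)[of k] F by blast
    have zlim: "z \<longlonglongrightarrow> x"
    proof (rule tendstoI)
      fix e :: real assume "e > 0"
      then obtain N where N: "1 / real (Suc N) < e"
        using nat_approx_posE by blast
      show "\<forall>\<^sub>F k in sequentially. dist (z k) x < e"
      proof (rule eventually_sequentiallyI[of N])
        fix k assume "N \<le> k"
        have "1 / real (Suc k) \<le> 1 / real (Suc N)"
          using \<open>N \<le> k\<close> by (simp add: frac_le)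
        thus "dist (z k) x < e" using zur(1)[of k] N by (simp add: dist_commute)
      qed
    qed
    obtain l s where l: "l \<in> sphere 0 1" and s: "strict_mono s" and ul: "(u \<circ> s) \<longlonglongrightarrow> l"
      using compact_imp_seq_compact[OF compact_sphere[of 0 1]] us unfolding seq_compact_def by metis
    have zs: "(z \<circ> s) \<longlonglongrightarrow> x" using LIMSEQ_subseq_LIMSEQ[OF zlim s] .
    have "brk y l \<le> brk x l" if "y \<in> K" for y
    proof -
      have "((\<lambda>k. brk y ((u \<circ> s) k)) \<longlonglongrightarrow> brk y l)"
        by (rule brk_tendsto[OF tendsto_const ul])
      moreover have "((\<lambda>k. brk ((z \<circ> s) k) ((u \<circ> s) k)) \<longlonglongrightarrow> brk x l)"
        by (rule brk_tendsto[OF zs ul])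
      moreover have "brk y ((u \<circ> s) k) \<le> brk ((z \<circ> s) k) ((u \<circ> s) k)" for k
      proof -
        have "brk y (u (s k)) \<le> cyl_supp K (u (s k))" using up[OF that] .
        also have "\<dots> \<le> r (s k)" using low[OF zur(2)] .
        also have "\<dots> \<le> brk (z (s k)) (u (s k))" using zur(3)[of "s k"] by simp
        finally show ?thesis by simp
      qed
      ultimately show ?thesis using LIMSEQ_le by blast
    qed
    hence "cyl_supp K l \<le> brk x l"
      unfolding cyl_supp_def using ne by (intro cSup_least) (auto simp: brk_sym)
    moreover have "brk x l \<le> cyl_supp K l" using up[OF xK] .
    ultimately show ?thesis using l by force
  qed
  show ?thesis using part1 part2 by blast
qed

end
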